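(* Let $(T,D)$ be a predominated tree. (i) $(T,D)$ is MBD critical if and only if there exists a substructure $F\in\mathcal S$ in $T$ such that $D=V(T)\setminus X(F)$. (ii) $(T,D)$ is an atomic MBD critical graph if and only if $T\in\mathcal S$ and $D=V(T)\setminus X(T)$.
   Context: A predominated graph is a pair $(G,D)$ with $G$ a finite simple graph and $D\subseteq V(G)$. In the MBD game on $(G,D)$, Staller and Dominator alternately claim unclaimed vertices of $V(G)$ (including vertices of $D$), Staller first, until all are claimed; Staller wins if she claims all of $N_G[v]$ for some $v\in V(G)\setminus D$, Dominator wins otherwise. $(G,D)$ is MBD critical if Staller wins on $(G,D)$ but Dominator wins on $(G,D\cup\{v\})$ for every $v\in V(G)\setminus D$. $(G,D)$ is atomic MBD critical if it is MBD critical, $D$ is an independent set of $G$, and no vertex of $D$ is isolated in $G$. For a tree $T'$, $S(T')$ is obtained by subdividing each edge of $T'$ exactly once; $\mathcal S=\{S(T'):T'\text{ a tree}\}$ and $X(S(T'))=V(T')$ (with $S(P_1)=P_1$, $X(P_1)=V(P_1)$). $F\in\mathcal S$ is a substructure in $G$ if $F$ is a subgraph of $G$ and $\deg_G(v)=\deg_F(v)$ for all $v\in X(F)$. *)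

theory Defs
  imports Main
begin

definition simple_graph :: "'a set \<Rightarrow> 'a set set \<Rightarrow> bool" where
  "simple_graph V E \<longleftrightarrow> finite V \<and>
     (\<forall>e\<in>E. \<exists>u v. e = {u, v} \<and> u \<noteq> v \<and> u \<in> V \<and> v \<in> V)"

definition adj :: "'a set set \<Rightarrow> 'a \<Rightarrow> 'a \<Rightarrow> bool" where
  "adj E u v \<longleftrightarrow> {u, v} \<in> E"

definition nbhd :: "'a set set \<Rightarrow> 'a \<Rightarrow> 'a set" where
  "nbhd E v = {u. {u, v} \<in> E}"

definition closed_nbhd :: "'a set set \<Rightarrow> 'a \<Rightarrow> 'a set" where
  "closed_nbhd E v = insert v (nbhd E v)"

definition degree :: "'a set set \<Rightarrow> 'a \<Rightarrow> nat" where
  "degree E v = card (nbhd E v)"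

definition walk :: "'a set \<Rightarrow> 'a set set \<Rightarrow> 'a list \<Rightarrow> bool" where
  "walk V E p \<longleftrightarrow> p \<noteq> [] \<and> set p \<subseteq> V \<and>
     (\<forall>i. Suc i < length p \<longrightarrow> adj E (p ! i) (p ! Suc i))"

definition connected_graph :: "'a set \<Rightarrow> 'a set set \<Rightarrow> bool" where
  "connected_graph V E \<longleftrightarrow> V \<noteq> {} \<and>
     (\<forall>u\<in>V. \<forall>v\<in>V. \<exists>p. walk V E p \<and> hd p = u \<and> last p = v)"

definition is_cycle :: "'a set \<Rightarrow> 'a set set \<Rightarrow> 'a list \<Rightarrow> bool" where
  "is_cycle V E c \<longleftrightarrow> length c \<ge> 3 \<and> distinct c \<and> walk V E c \<and> adj E (last c) (hd c)"

definition acyclic_graph :: "'a set \<Rightarrow> 'a set set \<Rightarrow> bool" where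
  "acyclic_graph V E \<longleftrightarrow> \<not> (\<exists>c. is_cycle V E c)"

definition tree :: "'a set \<Rightarrow> 'a set set \<Rightarrow> bool" where
  "tree V E \<longleftrightarrow> simple_graph V E \<and> connected_graph V E \<and> acyclic_graph V E"

text \<open>Staller wins at the end iff she claimed
  the closed neighbourhood of some vertex outside D.  sw turn n S Dm: Staller's
  set S, Dominator's set Dm, turn = True means Staller moves, n is the fuel.\<close>

definition staller_goal :: "'a set \<Rightarrow> 'a set set \<Rightarrow> 'a set \<Rightarrow> 'a set \<Rightarrow> bool" where
  "staller_goal V E D S \<longleftrightarrow> (\<exists>v\<in>V - D. closed_nbhd E v \<subseteq> S)"

fun sw :: "'a set \<Rightarrow> 'a set set \<Rightarrow> 'a set \<Rightarrow> bool \<Rightarrow> nat \<Rightarrow> 'a set \<Rightarrow> 'a set \<Rightarrow> bool" where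
  "sw V E D t 0 S Dm = staller_goal V E D S"
| "sw V E D True (Suc n) S Dm =
     (if V - S - Dm = {} then staller_goal V E D S
      else (\<exists>u\<in>V - S - Dm. sw V E D False n (insert u S) Dm))"
| "sw V E D False (Suc n) S Dm =
     (if V - S - Dm = {} then staller_goal V E D S
      else (\<forall>u\<in>V - S - Dm. sw V E D True n S (insert u Dm)))"

definition staller_wins :: "'a set \<Rightarrow> 'a set set \<Rightarrow> 'a set \<Rightarrow> bool" where
  "staller_wins V E D \<longleftrightarrow> sw V E D True (card V) {} {}"

definition mbd_critical :: "'a set \<Rightarrow> 'a set set \<Rightarrow> 'a set \<Rightarrow> bool" where
  "mbd_critical V E D \<longleftrightarrow> staller_wins V E D \<and>
     (\<forall>v\<in>V - D. \<not> staller_wins V E (insert v D))"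

definition atomic_mbd_critical :: "'a set \<Rightarrow> 'a set set \<Rightarrow> 'a set \<Rightarrow> bool" where
  "atomic_mbd_critical V E D \<longleftrightarrow> mbd_critical V E D \<and>
     (\<forall>u\<in>D. \<forall>v\<in>D. {u, v} \<notin> E) \<and> (\<forall>d\<in>D. \<exists>u. {u, d} \<in> E)"

text \<open>(VF, EF) is S(T') for a tree T' on vertex set X, where the original vertices keep
  their names and the subdivision vertex of edge e of T' is m e.  Then X(F) = X.\<close>
definition subdivided_tree :: "'a set \<Rightarrow> 'a set set \<Rightarrow> 'a set \<Rightarrow> bool" where
  "subdivided_tree VF EF X \<longleftrightarrow> X \<subseteq> VF \<and>
     (\<exists>E' m. tree X E' \<and> bij_betw m E' (VF - X) \<and>
        EF = (\<Union>e\<in>E'. (\<lambda>a. {a, m e}) ` e))"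

definition substructure :: "'a set \<Rightarrow> 'a set set \<Rightarrow> 'a set \<Rightarrow> 'a set set \<Rightarrow> 'a set \<Rightarrow> bool" where
  "substructure V E VF EF X \<longleftrightarrow> subdivided_tree VF EF X \<and> VF \<subseteq> V \<and> EF \<subseteq> E \<and>
     (\<forall>v\<in>X. degree E v = degree EF v)"

end

theory Submission
  imports Defs
begin


lemma walk_succ: "walk V E p \<longleftrightarrow> p \<noteq> [] \<and> set p \<subseteq> V \<and> successively (adj E) p"
  by (simp add: walk_def successively_conv_nth)

lemma adj_sym: "adj E u v = adj E v u" by (simp add: adj_def insert_commute)

lemma succ_adj_rev: "successively (adj E) (rev p) = successively (adj E) p"
  by (simp add: adj_sym)

definition reach :: "'a set \<Rightarrow> 'a set set \<Rightarrow> 'a \<Rightarrow> 'a \<Rightarrow> bool" where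
  "reach W E a b \<longleftrightarrow> (\<exists>p. walk W E p \<and> hd p = a \<and> last p = b)"

lemma reach_refl: "a \<in> W \<Longrightarrow> reach W E a a"
  unfolding reach_def by (rule exI[of _ "[a]"]) (simp add: walk_succ)

lemma reach_sym: "reach W E a b \<Longrightarrow> reach W E b a"
  unfolding reach_def walk_succ
  by (metis hd_rev last_rev rev_is_Nil_conv set_rev succ_adj_rev)

lemma reach_step: "reach W E a b \<Longrightarrow> b' \<in> W \<Longrightarrow> {b,b'} \<in> E \<Longrightarrow> reach W E a b'"
  unfolding reach_def walk_succ
  apply clarify
  subgoal for p by (rule exI[of _ "p @ [b']"]) (auto simp: successively_append_iff adj_def)
  done

lemma reach_walk: "successively (adj E) q \<Longrightarrow> set q \<subseteq> W \<Longrightarrow> q \<noteq> [] \<Longrightarrow> reach W E a (hd q) \<Longrightarrow> reach W E a (last q)"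
proof (induction q arbitrary: a rule: induct_list012)
  case (3 x y r)
  then have "reach W E a y" using reach_step[of W E a x y] by (auto simp: adj_def)
  then show ?case using 3 by auto
qed auto

lemma reach_trans: "reach W E a b \<Longrightarrow> reach W E b c \<Longrightarrow> reach W E a c"
  by (metis reach_def reach_walk walk_succ)

lemma reach_in: "reach W E a b \<Longrightarrow> a \<in> W \<and> b \<in> W"
  unfolding reach_def walk_succ by auto

lemma distinct_walk:
  "walk W E p \<Longrightarrow> \<exists>q. walk W E q \<and> hd q = hd p \<and> last q = last p \<and> distinct q"
proof (induction "length p" arbitrary: p rule: less_induct)
  case less
  show ?case
  proof (cases "distinct p")
    case True then show ?thesis using less.prems by blast
  next
    case False
    then obtain xs ys zs y where p: "p = xs@[y]@ys@[y]@zs" using not_distinct_decomp by blast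
    define q where "q = xs @ [y] @ zs"
    have s: "successively (adj E) p" "set p \<subseteq> W" using less.prems by (auto simp: walk_succ)
    have "successively (adj E) q" using s(1) unfolding p q_def
      by (auto simp: successively_append_iff successively_Cons split: if_splits)
    moreover have "set q \<subseteq> W" using s(2) unfolding p q_def by auto
    ultimately have "walk W E q" by (simp add: walk_succ q_def)
    moreover have "hd q = hd p" "last q = last p" unfolding p q_def
      by (cases xs; simp) (cases zs; simp)
    moreover have "length q < length p" unfolding p q_def by simp
    ultimately show ?thesis using less.hyps by metis
  qed
qed

lemma cycle_from_reach:
  assumes ac: "acyclic_graph V E" and W: "W \<subseteq> V - {u}" and u: "u \<in> V"
    and a: "{a,u} \<in> E" and b: "{b,u} \<in> E" and ab: "a \<noteq> b" and r: "reach W E a b"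
  shows False
proof -
  obtain p where p: "walk W E p" "hd p = a" "last p = b" using r reach_def by metis
  obtain q where q: "walk W E q" "hd q = a" "last q = b" "distinct q"
    using distinct_walk[OF p(1)] p by metis
  have qW: "set q \<subseteq> W" "q \<noteq> []" "successively (adj E) q" using q(1) walk_succ by metis+
  have "length q \<noteq> 1" using q ab qW by (cases q) auto
  then have lq: "length q \<ge> 2" using qW(2) by (cases q) (auto simp: Suc_le_eq)
  define c where "c = q @ [u]"
  have "is_cycle V E c"
    unfolding is_cycle_def walk_succ c_def using lq q qW W u a b
    by (auto simp: successively_append_iff adj_def insert_commute)
  then show False using ac acyclic_graph_def by blast
qed

lemma sg_edge: "simple_graph V E \<Longrightarrow> {a,b} \<in> E \<Longrightarrow> a \<noteq> b \<and> a \<in> V \<and> b \<in> V"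
  unfolding simple_graph_def by (metis doubleton_eq_iff)

lemma sg_fin: "simple_graph V E \<Longrightarrow> finite V" unfolding simple_graph_def by blast

lemma acyclic_leaf:
  assumes sg: "simple_graph X F" and ac: "acyclic_graph X F" and ne: "X \<noteq> {}"
  shows "\<exists>v\<in>X. \<forall>y z. {v,y} \<in> F \<longrightarrow> {v,z} \<in> F \<longrightarrow> y = z"
proof -
  have fin: "finite X" using sg sg_fin by blast
  define P where "P = (\<lambda>n. \<exists>p. walk X F p \<and> distinct p \<and> length p = n)"
  obtain x0 where x0: "x0 \<in> X" using ne by blast
  have P1: "P 1" unfolding P_def by (rule exI[of _ "[x0]"]) (simp add: walk_succ x0)
  have bnd: "\<forall>n. P n \<longrightarrow> n \<le> card X"
    unfolding P_def walk_succ by (metis card_mono distinct_card fin)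
  obtain n where Pn: "P n" and mx: "\<forall>m. P m \<longrightarrow> m \<le> n"
    using Nat.ex_has_greatest_nat[of P 1 "card X"] P1 bnd by blast
  obtain p where p: "walk X F p" "distinct p" "length p = n" using Pn P_def by blast
  have pW: "set p \<subseteq> X" "p \<noteq> []" "successively (adj F) p" using p(1) walk_succ by metis+
  define v where "v = last p"
  have vX: "v \<in> X" using pW v_def by auto
  have key: "\<exists>xs. p = xs @ [y, v]" if e: "{v,y} \<in> F" for y
  proof -
    have yv: "y \<noteq> v" "y \<in> X" using sg_edge[OF sg e] by auto
    show ?thesis
    proof (cases "y \<in> set p")
      case False
      have "walk X F (p @ [y])" using pW yv e unfolding walk_succ v_def
        by (auto simp: successively_append_iff adj_def)
      moreover have "distinct (p @ [y])" using p False by simp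
      ultimately have "P (Suc n)" unfolding P_def using p by (intro exI[of _ "p @ [y]"]) simp
      then show ?thesis using mx by fastforce
    next
      case True
      then obtain xs ys where pxy: "p = xs @ y # ys" by (meson split_list)
      have ys: "ys \<noteq> []" using pxy yv v_def by auto
      have lys: "last ys = v" using pxy ys v_def by simp
      show ?thesis
      proof (cases "ys = [v]")
        case True then show ?thesis using pxy by simp
      next
        case False
        have "length ys \<noteq> 1" using False ys lys by (cases ys) auto
        then have l2: "length ys \<ge> 2" using ys by (cases ys) (auto simp: Suc_le_eq)
        have "is_cycle X F (y # ys)"
          unfolding is_cycle_def walk_succ using l2 p(2) pW pxy lys e
          by (auto simp: successively_append_iff adj_def insert_commute)
        then show ?thesis using ac acyclic_graph_def by blast
      qed
    qed
  qed
  show ?thesis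
  proof (intro bexI[OF _ vX] allI impI)
    fix y z assume "{v,y} \<in> F" "{v,z} \<in> F"
    then obtain xs xs' where "p = xs @ [y,v]" "p = xs' @ [z,v]" using key by blast
    then have "rev p = v # y # rev xs" "rev p = v # z # rev xs'" by auto
    then show "y = z" by simp
  qed
qed



definition LS :: "'a set set \<Rightarrow> 'a set \<Rightarrow> 'a set \<Rightarrow> 'a set \<Rightarrow> bool" where
  "LS E U Y X \<longleftrightarrow> X \<noteq> {} \<and> X \<subseteq> U \<and> X \<subseteq> Y \<and> (\<forall>x\<in>X. \<forall>x'\<in>X. {x,x'} \<notin> E) \<and>
     (\<forall>m\<in>U. (\<exists>x\<in>X. {m,x} \<in> E) \<longrightarrow> card {x\<in>X. {m,x} \<in> E} = 2)"

lemma LS_mono_Y: "LS E U Y1 X \<Longrightarrow> Y1 \<subseteq> Y2 \<Longrightarrow> LS E U Y2 X"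
  unfolding LS_def by blast

lemma LS_lift:
  assumes "LS E U' Y X" "U' \<subseteq> U" "\<forall>m\<in>U - U'. \<forall>x\<in>X. {m,x} \<notin> E"
  shows "LS E U Y X"
proof -
  have c: "card {x\<in>X. {m,x} \<in> E} = 2" if "m \<in> U" "\<exists>x\<in>X. {m,x} \<in> E" for m
  proof (cases "m \<in> U'")
    case True then show ?thesis using assms(1) that unfolding LS_def by blast
  next
    case False then show ?thesis using assms(3) that by blast
  qed
  show ?thesis using assms(1,2) c unfolding LS_def by blast
qed

lemma LS_restrict:
  assumes L: "LS E U Y X" and z: "z \<in> X"
  shows "LS E U Y (X \<inter> {t. reach U E z t})"
proof -
  have XU: "X \<subseteq> U" using L unfolding LS_def by blast
  have zU: "z \<in> U" using XU z by blast
  have 1: "X \<inter> {t. reach U E z t} \<noteq> {}" using z reach_refl[OF zU] by blast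
  have 2: "{x \<in> X \<inter> {t. reach U E z t}. {m,x} \<in> E} = {x\<in>X. {m,x} \<in> E}"
    if m: "m \<in> U" and x: "x \<in> X" "reach U E z x" "{m,x} \<in> E" for m x
  proof -
    have xm: "{x,m} \<in> E" using x(3) by (simp add: insert_commute)
    have zm: "reach U E z m" using reach_step[OF x(2) m xm] .
    have "reach U E z t" if "t \<in> X" "{m,t} \<in> E" for t
      using reach_step[OF zm, of t] that XU by blast
    then show ?thesis by blast
  qed
  have c: "card {x \<in> X \<inter> {t. reach U E z t}. {m,x} \<in> E} = 2"
    if mU: "m \<in> U" and ex: "\<exists>x\<in>X \<inter> {t. reach U E z t}. {m,x} \<in> E" for m
  proof -
    obtain x where x: "x \<in> X" "reach U E z x" "{m,x} \<in> E" using ex by blast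
    have e: "{x \<in> X \<inter> {t. reach U E z t}. {m,x} \<in> E} = {x\<in>X. {m,x} \<in> E}"
      using 2[OF mU x] .
    have "\<forall>m\<in>U. (\<exists>x\<in>X. {m,x} \<in> E) \<longrightarrow> card {x\<in>X. {m,x} \<in> E} = 2" using L unfolding LS_def by blast
    then have "card {x\<in>X. {m,x} \<in> E} = 2" using mU x by blast
    then show ?thesis using e by simp
  qed
  have ind: "\<forall>x\<in>X. \<forall>x'\<in>X. {x,x'} \<notin> E" "X \<subseteq> Y" using L unfolding LS_def by blast+
  show ?thesis unfolding LS_def using 1 c XU ind by blast
qed

lemma single_LS:
  assumes sg: "simple_graph V E" and u: "u \<in> U" "u \<in> Y" and nb: "\<forall>m\<in>U. {m,u} \<notin> E"
  shows "LS E U Y {u}"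
proof -
  have "{u,u} \<notin> E" using sg_edge[OF sg, of u u] by blast
  then show ?thesis using u nb unfolding LS_def by auto
qed

lemma LS_parts:
  assumes "LS E U Y X"
  shows "X \<noteq> {}" "X \<subseteq> U" "X \<subseteq> Y" "x \<in> X \<Longrightarrow> x' \<in> X \<Longrightarrow> {x,x'} \<notin> E"
    "m \<in> U \<Longrightarrow> x \<in> X \<Longrightarrow> {m,x} \<in> E \<Longrightarrow> card {x\<in>X. {m,x} \<in> E} = 2"
  using assms unfolding LS_def by blast+

locale keyctx =
  fixes V E U Y u
  assumes sg: "simple_graph V E" and ac: "acyclic_graph V E" and UV: "U \<subseteq> V"
    and uU: "u \<in> U" and noLS: "\<not> (\<exists>X. LS E U Y X)"
begin

abbreviation "U' \<equiv> U - {u}"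
abbreviation "R a \<equiv> {t. reach U' E a t}"

definition bad where
  "bad a \<longleftrightarrow> a \<in> U' \<and> {a,u} \<in> E \<and> (\<exists>Z. LS E U' (Y - {u}) Z \<and> a \<in> Z \<and> Z \<subseteq> R a)"

lemma K0:
  assumes "{a,u} \<in> E" "{t,u} \<in> E" "reach U' E a t" shows "t = a"
  using cycle_from_reach[OF ac, of U' u a t] assms UV uU by blast

lemma K1:
  assumes L: "LS E U' (Y - {u}) Z" shows "\<exists>b\<in>Z. bad b"
proof -
  obtain z where z: "z \<in> Z" using LS_parts(1)[OF L] by blast
  define Z1 where "Z1 = Z \<inter> R z"
  have L1: "LS E U' (Y - {u}) Z1" unfolding Z1_def by (rule LS_restrict[OF L z])
  show ?thesis
  proof (cases "\<exists>b\<in>Z1. {b,u} \<in> E")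
    case True
    then obtain b where b: "b \<in> Z1" "{b,u} \<in> E" by blast
    have "reach U' E z b" using b(1) unfolding Z1_def by blast
    then have bz: "reach U' E b z" by (rule reach_sym)
    have "Z1 \<subseteq> R b" unfolding Z1_def using reach_trans[OF bz] by blast
    then have "bad b" unfolding bad_def using L1 b LS_parts(2)[OF L1] by blast
    then show ?thesis using b Z1_def by blast
  next
    case False
    have "LS E U (Y - {u}) Z1"
      by (rule LS_lift[OF L1]) (use False uU in \<open>auto simp: insert_commute\<close>)
    then have "LS E U Y Z1" using LS_mono_Y by blast
    then show ?thesis using noLS by blast
  qed
qed

lemma side:
  assumes Za: "Z \<subseteq> R a" and Zb: "Z' \<subseteq> R b" and dis: "R a \<inter> R b = {}"
    and L: "LS E U' (Y - {u}) Z" and L': "LS E U' (Y - {u}) Z'"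
    and m: "m \<in> U'" and t: "t \<in> Z" "{m,t} \<in> E"
  shows "{x \<in> Z \<union> Z'. {m,x} \<in> E} = {x\<in>Z. {m,x} \<in> E}"
proof -
  have "reach U' E a m" using reach_step[of U' E a t m] Za t m by (auto simp: insert_commute)
  moreover have "reach U' E b m" if "x \<in> Z'" "{m,x} \<in> E" for x
    using reach_step[of U' E b x m] Zb that m by (auto simp: insert_commute)
  ultimately show ?thesis using dis by blast
qed

lemma K2:
  assumes a: "bad a" and b: "bad b" and ab: "a \<noteq> b" shows False
proof -
  obtain Z where Z: "LS E U' (Y - {u}) Z" "a \<in> Z" "Z \<subseteq> R a" using a unfolding bad_def by blast
  obtain Z' where Z': "LS E U' (Y - {u}) Z'" "b \<in> Z'" "Z' \<subseteq> R b" using b unfolding bad_def by blast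
  have au: "a \<in> U'" "{a,u} \<in> E" and bu: "b \<in> U'" "{b,u} \<in> E" using a b unfolding bad_def by auto
  have dis: "R a \<inter> R b = {}"
  proof (rule ccontr)
    assume "R a \<inter> R b \<noteq> {}"
    then obtain t where t1: "reach U' E a t" and t2: "reach U' E b t" by blast
    have "reach U' E t b" using t2 by (rule reach_sym)
    then have "reach U' E a b" using t1 reach_trans by metis
    then have "b = a" using K0[OF au(2) bu(2)] by blast
    then show False using ab by simp
  qed
  have ZU: "Z \<subseteq> U'" "Z' \<subseteq> U'" using LS_parts(2)[OF Z(1)] LS_parts(2)[OF Z'(1)] by auto
  have indep: "{x,x'} \<notin> E" if "x \<in> Z" "x' \<in> Z'" for x x'
  proof
    assume e: "{x,x'} \<in> E"
    have "reach U' E a x" using Z(3) that(1) by blast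
    moreover have "x' \<in> U'" using ZU that by blast
    ultimately have "reach U' E a x'" using reach_step e by metis
    then show False using dis Z'(3) that by blast
  qed
  have ua: "x = a" if "x \<in> Z" "{u,x} \<in> E" for x
  proof -
    have "{x,u} \<in> E" using that(2) by (simp add: insert_commute)
    moreover have "reach U' E a x" using Z(3) that(1) by blast
    ultimately show ?thesis using K0[OF au(2)] by blast
  qed
  have ub: "x = b" if "x \<in> Z'" "{u,x} \<in> E" for x
  proof -
    have "{x,u} \<in> E" using that(2) by (simp add: insert_commute)
    moreover have "reach U' E b x" using Z'(3) that(1) by blast
    ultimately show ?thesis using K0[OF bu(2)] by blast
  qed
  have ua': "{u,a} \<in> E" "{u,b} \<in> E" using au bu by (simp_all add: insert_commute)
  have cnt_u: "{x \<in> Z \<union> Z'. {u,x} \<in> E} = {a,b}"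
    using ua ub ua' Z(2) Z'(2) by blast
  have c1: "Z \<union> Z' \<noteq> {}" using Z(2) by blast
  have c2: "Z \<union> Z' \<subseteq> U" using ZU by blast
  have c3: "Z \<union> Z' \<subseteq> Y" using LS_parts(3)[OF Z(1)] LS_parts(3)[OF Z'(1)] by blast
  have c4: "\<forall>x\<in>Z \<union> Z'. \<forall>x'\<in>Z \<union> Z'. {x,x'} \<notin> E"
  proof (intro ballI)
    fix x x' assume x: "x \<in> Z \<union> Z'" and x': "x' \<in> Z \<union> Z'"
    show "{x,x'} \<notin> E"
    proof (cases "x \<in> Z")
      case True
      show ?thesis
      proof (cases "x' \<in> Z")
        case True then show ?thesis using \<open>x \<in> Z\<close> LS_parts(4)[OF Z(1)] by blast
      next
        case False then show ?thesis using \<open>x \<in> Z\<close> x' indep by blast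
      qed
    next
      case False
      then have xZ': "x \<in> Z'" using x by blast
      show ?thesis
      proof (cases "x' \<in> Z")
        case True then have "{x',x} \<notin> E" using xZ' indep by blast
        then show ?thesis by (simp add: insert_commute)
      next
        case False then show ?thesis using xZ' x' LS_parts(4)[OF Z'(1)] by blast
      qed
    qed
  qed
  have c5: "card {x \<in> Z \<union> Z'. {m, x} \<in> E} = 2" if m: "m \<in> U" and ex: "\<exists>x\<in>Z \<union> Z'. {m, x} \<in> E" for m
  proof (cases "m = u")
    case True then show ?thesis using cnt_u ab by simp
  next
    case False
    then have m': "m \<in> U'" using m by blast
    from ex obtain t where t: "t \<in> Z \<union> Z'" "{m,t} \<in> E" by blast
    show ?thesis
    proof (cases "t \<in> Z")
      case True
      have "{x \<in> Z \<union> Z'. {m,x} \<in> E} = {x\<in>Z. {m,x} \<in> E}"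
        using side[OF Z(3) Z'(3) dis Z(1) Z'(1) m' True t(2)] .
      then show ?thesis using LS_parts(5)[OF Z(1) m' True t(2)] by simp
    next
      case False
      then have tZ': "t \<in> Z'" using t by blast
      have dis': "R b \<inter> R a = {}" using dis by blast
      have "{x \<in> Z' \<union> Z. {m,x} \<in> E} = {x\<in>Z'. {m,x} \<in> E}"
        using side[OF Z'(3) Z(3) dis' Z'(1) Z(1) m' tZ' t(2)] .
      then show ?thesis using LS_parts(5)[OF Z'(1) m' tZ' t(2)] by (simp add: Un_commute)
    qed
  qed
  have "LS E U Y (Z \<union> Z')" unfolding LS_def using c1 c2 c3 c4 c5 by blast
  then show False using noLS by blast
qed

lemma noloop: "{x,x} \<notin> E"
  using sg_edge[OF sg, of x x] by blast

lemma key_single: "U = {u} \<Longrightarrow> u \<notin> Y"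
  using single_LS[OF sg, of u U Y] noLS uU noloop by (metis singletonD)

lemma key:
  assumes ne: "U \<noteq> {u}"
  shows "\<exists>w\<in>U'. (u \<in> Y \<longrightarrow> {u,w} \<in> E) \<and>
     \<not> (\<exists>X. LS E (U - {u,w}) (Y - {u} - {y. y = w \<or> {y,w} \<in> E}) X)"
proof -
  obtain w where w: "w \<in> U'" "u \<in> Y \<longrightarrow> {u,w} \<in> E" "(\<exists>a. bad a) \<longrightarrow> bad w"
  proof (cases "\<exists>a. bad a")
    case True
    then obtain a where "bad a" by blast
    then show ?thesis using that bad_def by (metis insert_commute)
  next
    case nb: False
    show ?thesis
    proof (cases "\<exists>a\<in>U'. {a,u} \<in> E")
      case True
      then obtain a where "a \<in> U'" "{a,u} \<in> E" by blast
      then show ?thesis using that nb by (metis insert_commute)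
    next
      case False
      obtain a where a: "a \<in> U'" using ne uU by blast
      have "u \<notin> Y"
      proof
        assume "u \<in> Y"
        have "LS E U Y {u}"
          by (rule single_LS[OF sg uU \<open>u \<in> Y\<close>]) (use False noloop in \<open>auto simp: insert_commute\<close>)
        then show False using noLS by blast
      qed
      then show ?thesis using that[OF a] nb by blast
    qed
  qed
  show ?thesis
  proof (intro bexI[OF _ w(1)] conjI w(2) notI)
    assume "\<exists>X. LS E (U - {u,w}) (Y - {u} - {y. y = w \<or> {y,w} \<in> E}) X"
    then obtain Z where Z: "LS E (U - {u,w}) (Y - {u} - {y. y = w \<or> {y,w} \<in> E}) Z" by blast
    have "LS E U' (Y - {u} - {y. y = w \<or> {y,w} \<in> E}) Z"
      by (rule LS_lift[OF Z]) (use LS_parts(3)[OF Z] in \<open>auto simp: insert_commute\<close>)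
    then have "LS E U' (Y - {u}) Z" using LS_mono_Y by blast
    then obtain b where b: "b \<in> Z" "bad b" using K1 by blast
    have "b \<noteq> w" using b LS_parts(2)[OF Z] by blast
    then show False using K2[OF b(2)] w(3) b by blast
  qed
qed

end



lemma goal_mono: "staller_goal V E D S \<Longrightarrow> S \<subseteq> S' \<Longrightarrow> staller_goal V E D S'"
  unfolding staller_goal_def by blast

lemma sw_goal: "staller_goal V E D S \<Longrightarrow> sw V E D t n S Dm"
proof (induction n arbitrary: t S Dm)
  case 0 then show ?case by (cases t) auto
next
  case (Suc n)
  have g: "staller_goal V E D (insert u S)" for u using goal_mono[OF Suc.prems] by blast
  show ?case
  proof (cases t)
    case True then show ?thesis using Suc.IH[OF g] Suc.prems by auto
  next
    case False then show ?thesis using Suc.IH Suc.prems by auto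
  qed
qed

lemma cn_iff: "w \<in> closed_nbhd E y \<longleftrightarrow> w = y \<or> {w,y} \<in> E"
  by (auto simp: closed_nbhd_def nbhd_def)

definition Yr :: "'a set \<Rightarrow> 'a set set \<Rightarrow> 'a set \<Rightarrow> 'a set \<Rightarrow> 'a set \<Rightarrow> 'a set" where
  "Yr V E D S Dm = {y \<in> V - D. y \<notin> S \<and> (\<forall>d\<in>Dm. d \<notin> closed_nbhd E y)}"

lemma goal_false:
  assumes dis: "S \<inter> Dm = {}" and dom: "\<forall>y\<in>V-D. y \<in> S \<longrightarrow> (\<exists>d\<in>Dm. d \<in> closed_nbhd E y)"
    and uU: "u \<notin> Dm"
    and uw: "u \<in> Yr V E D S Dm \<longrightarrow> (\<exists>w. w \<notin> S \<and> w \<noteq> u \<and> {u,w} \<in> E)"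
  shows "\<not> staller_goal V E D (insert u S)"
proof
  assume "staller_goal V E D (insert u S)"
  then obtain y where y: "y \<in> V - D" "closed_nbhd E y \<subseteq> insert u S" unfolding staller_goal_def by blast
  have yin: "y \<in> insert u S" using y(2) by (auto simp: closed_nbhd_def)
  show False
  proof (cases "\<exists>d\<in>Dm. d \<in> closed_nbhd E y")
    case True
    then obtain d where "d \<in> Dm" "d \<in> closed_nbhd E y" by blast
    then show False using y(2) dis uU by blast
  next
    case False
    then have "y \<notin> S" using dom y(1) by blast
    then have yu: "y = u" using yin by blast
    then have "u \<in> Yr V E D S Dm" unfolding Yr_def using y(1) False \<open>y \<notin> S\<close> by blast
    then obtain w where "w \<notin> S" "w \<noteq> u" "{u,w} \<in> E" using uw by blast
    then have "w \<in> closed_nbhd E y" using yu cn_iff by (metis insert_commute)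
    then show False using y(2) \<open>w \<notin> S\<close> \<open>w \<noteq> u\<close> by blast
  qed
qed

lemma dom_wins:
  assumes sg: "simple_graph V E" and ac: "acyclic_graph V E"
  shows "S \<inter> Dm = {} \<Longrightarrow> (\<forall>y\<in>V-D. y \<in> S \<longrightarrow> (\<exists>d\<in>Dm. d \<in> closed_nbhd E y)) \<Longrightarrow>
     \<not> (\<exists>X. LS E (V - S - Dm) (Yr V E D S Dm) X) \<Longrightarrow> \<not> sw V E D True n S Dm"
proof (induction n arbitrary: S Dm rule: less_induct)
  case (less N)
  show ?case
  proof (cases N)
  case 0
  have "\<not> staller_goal V E D S"
  proof
    assume "staller_goal V E D S"
    then obtain y where y: "y \<in> V - D" "closed_nbhd E y \<subseteq> S" unfolding staller_goal_def by blast
    then have "y \<in> S" by (auto simp: closed_nbhd_def)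
    then show False using less.prems y by blast
  qed
  then show ?thesis using 0 by simp
next
  case (Suc n)
  note dis = less.prems(1) and dom = less.prems(2) and nls = less.prems(3)
  define U where "U = V - S - Dm"
  have nogoal: "\<not> staller_goal V E D S"
  proof
    assume "staller_goal V E D S"
    then obtain y where y: "y \<in> V - D" "closed_nbhd E y \<subseteq> S" unfolding staller_goal_def by blast
    then have "y \<in> S" by (auto simp: closed_nbhd_def)
    then show False using dis dom y by blast
  qed
  have "\<not> sw V E D False n (insert u S) Dm" if uU: "u \<in> U" for u
  proof -
    interpret keyctx V E U "Yr V E D S Dm" u
      using sg ac uU nls unfolding U_def by unfold_locales auto
    have uDm: "u \<notin> Dm" "u \<notin> S" using uU U_def by auto
    show ?thesis
    proof (cases "U = {u}")
      case True
      then have nY: "u \<notin> Yr V E D S Dm" using key_single by blast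
      have ng: "\<not> staller_goal V E D (insert u S)"
        using goal_false[OF dis dom uDm(1)] nY by blast
      show ?thesis
      proof (cases n)
        case 0 then show ?thesis using ng by simp
      next
        case (Suc k)
        have "V - insert u S - Dm = {}" using True U_def by blast
        then show ?thesis using ng Suc by simp
      qed
    next
      case False
      obtain w where w: "w \<in> U - {u}" "u \<in> Yr V E D S Dm \<longrightarrow> {u,w} \<in> E"
        and nl: "\<not> (\<exists>X. LS E (U - {u,w}) (Yr V E D S Dm - {u} - {y. y = w \<or> {y,w} \<in> E}) X)"
        using key[OF False] by blast
      have ng: "\<not> staller_goal V E D (insert u S)"
        using goal_false[OF dis dom uDm(1)] w U_def by blast
      show ?thesis
      proof (cases n)
        case 0 then show ?thesis using ng by simp
      next
        case (Suc k)
        have wfree: "w \<in> V - insert u S - Dm" using w U_def by blast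
        have dis': "insert u S \<inter> insert w Dm = {}" using dis uDm w U_def by blast
        have dom': "\<forall>y\<in>V-D. y \<in> insert u S \<longrightarrow> (\<exists>d\<in>insert w Dm. d \<in> closed_nbhd E y)"
        proof (intro ballI impI)
          fix y assume y: "y \<in> V - D" "y \<in> insert u S"
          show "\<exists>d\<in>insert w Dm. d \<in> closed_nbhd E y"
          proof (cases "y \<in> S")
            case True then show ?thesis using dom y by blast
          next
            case False
            then have yu: "y = u" using y by blast
            show ?thesis
            proof (cases "\<exists>d\<in>Dm. d \<in> closed_nbhd E y")
              case True then show ?thesis by blast
            next
              case False
              then have "u \<in> Yr V E D S Dm" unfolding Yr_def using y yu uDm by blast
              then have "{u,w} \<in> E" using w by blast
              then have "w \<in> closed_nbhd E y" using yu cn_iff by (metis insert_commute)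
              then show ?thesis by blast
            qed
          qed
        qed
        have Ueq: "V - insert u S - insert w Dm = U - {u,w}" unfolding U_def by blast
        have Ysub: "Yr V E D (insert u S) (insert w Dm) \<subseteq> Yr V E D S Dm - {u} - {y. y = w \<or> {y,w} \<in> E}"
          unfolding Yr_def by (auto simp: cn_iff insert_commute)
        have nls': "\<not> (\<exists>X. LS E (V - insert u S - insert w Dm) (Yr V E D (insert u S) (insert w Dm)) X)"
          using nl Ysub LS_mono_Y unfolding Ueq by blast
        have "\<not> sw V E D True k (insert u S) (insert w Dm)"
          using less.IH[OF _ dis' dom' nls'] Suc \<open>N = Suc n\<close> by simp
        then show ?thesis using Suc wfree by auto
      qed
    qed
  qed
  then show ?thesis using nogoal U_def Suc by auto
qed
qed

lemma dom_wins_start: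
  assumes "simple_graph V E" "acyclic_graph V E" "\<not> (\<exists>X. LS E V (V - D) X)"
  shows "\<not> staller_wins V E D"
proof -
  have "Yr V E D {} {} = V - D" unfolding Yr_def by auto
  then show ?thesis unfolding staller_wins_def using dom_wins[OF assms(1,2), of "{}" "{}" D] assms(3) by auto
qed



lemma edge_sub: assumes "simple_graph X F" "e \<in> F" shows "e \<subseteq> X"
proof -
  obtain u v where "e = {u,v}" "u \<in> X" "v \<in> X" using assms unfolding simple_graph_def by meson
  then show ?thesis by simp
qed
lemma edge2: assumes "simple_graph X F" "e \<in> F" "x \<in> e" shows "\<exists>z. e = {x,z} \<and> z \<noteq> x \<and> z \<in> X"
proof -
  obtain u v where "e = {u,v}" "u \<in> X" "v \<in> X" "u \<noteq> v" using assms unfolding simple_graph_def by meson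
  then show ?thesis using assms(3) by (metis insert_commute insert_iff singletonD)
qed
lemma sub_acyclic:
  assumes "acyclic_graph X F" "X2 \<subseteq> X" "F2 \<subseteq> F"
  shows "acyclic_graph X2 F2"
proof -
  have "is_cycle X F c" if "is_cycle X2 F2 c" for c
  proof -
    have "successively (adj F) c" if "successively (adj F2) c"
      by (rule successively_mono[OF that]) (use assms(3) in \<open>auto simp: adj_def\<close>)
    then show ?thesis using that assms(2,3) unfolding is_cycle_def walk_succ by (auto simp: adj_def)
  qed
  then show ?thesis using assms(1) unfolding acyclic_graph_def by blast
qed

locale stctx =
  fixes V E D X F m
  assumes sg: "simple_graph V E" and sgF: "simple_graph X F" and acF: "acyclic_graph X F"
    and XV: "X \<subseteq> V" and mV: "m ` F \<subseteq> V" and mX: "m ` F \<inter> X = {}" and inj: "inj_on m F"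
    and nb: "\<forall>x\<in>X. closed_nbhd E x = insert x (m ` {e\<in>F. x \<in> e})"
    and XD: "X \<inter> D = {}"
begin

lemma finV: "finite V" using sg sg_fin by blast

lemma core:
  "X2 \<subseteq> X \<Longrightarrow> X2 \<noteq> {} \<Longrightarrow> (\<forall>x\<in>X2. x \<notin> S \<and> x \<notin> Dm) \<Longrightarrow>
   (\<forall>e\<in>F. e \<subseteq> X2 \<longrightarrow> m e \<notin> S \<and> m e \<notin> Dm) \<Longrightarrow>
   (\<forall>x\<in>X2. \<forall>e\<in>F. x \<in> e \<longrightarrow> \<not> e \<subseteq> X2 \<longrightarrow> m e \<in> S) \<Longrightarrow>
   card (V - S - Dm) \<le> n \<Longrightarrow> sw V E D True n S Dm"
proof (induction n arbitrary: X2 S Dm rule: less_induct)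
  case (less n)
  note X2X = less.prems(1) and X2ne = less.prems(2) and fr = less.prems(3) and fm = less.prems(4)
    and out = less.prems(5) and cd = less.prems(6)
  define F2 where "F2 = {e\<in>F. e \<subseteq> X2}"
  have sg2: "simple_graph X2 F2"
    unfolding simple_graph_def
  proof (intro conjI ballI)
    show "finite X2" using finite_subset[OF X2X] sgF sg_fin by blast
    fix e assume e: "e \<in> F2"
    have eF: "e \<in> F" using e unfolding F2_def by blast
    obtain u v where "e = {u,v}" "u \<noteq> v" using sgF eF unfolding simple_graph_def by meson
    then show "\<exists>u v. e = {u, v} \<and> u \<noteq> v \<and> u \<in> X2 \<and> v \<in> X2" using e F2_def by auto
  qed
  have "F2 \<subseteq> F" unfolding F2_def by blast
  then have ac2: "acyclic_graph X2 F2" by (rule sub_acyclic[OF acF X2X])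
  obtain x where x: "x \<in> X2" and leaf: "\<forall>y z. {x,y} \<in> F2 \<longrightarrow> {x,z} \<in> F2 \<longrightarrow> y = z"
    using acyclic_leaf[OF sg2 ac2 X2ne] by blast
  have xV: "x \<in> V" "x \<notin> D" using x X2X XV XD by blast+
  have xX: "x \<in> X" using x X2X by blast
  have cnx: "closed_nbhd E x = insert x (m ` {e\<in>F. x \<in> e})" using nb[rule_format, OF xX] .
  have xfree: "x \<in> V - S - Dm" using x fr xV by blast
  have cpos: "card (V - S - Dm) > 0" using xfree finV by (auto simp: card_gt_0_iff)
  then obtain k where nk: "n = Suc k" using cd by (cases n) auto
  have F2x: "e = {x,y}" if ee: "e \<in> F2" "x \<in> e" "{x,y} \<in> F2" for e y
  proof -
    obtain z where "e = {x,z}" using edge2[OF sg2 ee(1,2)] by blast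
    then show ?thesis using leaf ee by blast
  qed
  show ?case
  proof (cases "\<exists>y. {x,y} \<in> F2")
    case False
    have "m e \<in> S" if ee: "e \<in> F" "x \<in> e" for e
    proof -
      obtain z where z: "e = {x,z}" using edge2[OF sgF ee] by blast
      then have "\<not> e \<subseteq> X2" using False ee F2_def by blast
      then show ?thesis using out x ee by blast
    qed
    then have "staller_goal V E D (insert x S)"
      unfolding staller_goal_def using xV by (intro bexI[of _ x]) (auto simp: cnx)
    then have "sw V E D False k (insert x S) Dm" by (rule sw_goal)
    then show ?thesis using nk xfree by auto
  next
    case True
    then obtain y where e0: "{x,y} \<in> F2" by blast
    define e0 where "e0 = {x,y}"
    have e0F: "e0 \<in> F" "e0 \<subseteq> X2" using e0 e0_def F2_def by auto
    have me0: "m e0 \<in> V" "m e0 \<notin> S" "m e0 \<notin> Dm" "m e0 \<notin> X" using e0F fm mV mX by auto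
    have yx: "y \<noteq> x" "y \<in> X2" using e0F e0_def sg_edge[OF sgF, of x y] by auto
    have mx: "m e0 \<noteq> x" using me0 x X2X by blast
    let ?S1 = "insert (m e0) S"
    have cd1: "card (V - ?S1 - Dm) = card (V - S - Dm) - 1"
    proof -
      have "V - ?S1 - Dm = (V - S - Dm) - {m e0}" by blast
      then show ?thesis using me0 finV by (simp add: card_Diff_singleton)
    qed
    have x1: "x \<in> V - ?S1 - Dm" using xfree mx by blast
    then have "card (V - ?S1 - Dm) > 0" using finV by (auto simp: card_gt_0_iff)
    then obtain j where kj: "k = Suc j" using cd cd1 nk by (cases k) auto
    have resp: "sw V E D True j ?S1 (insert u Dm)" if u: "u \<in> V - ?S1 - Dm" for u
    proof (cases "u = x")
      case False
      have x2: "x \<in> V - ?S1 - insert u Dm" using x1 False by blast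
      have cd2: "card (V - ?S1 - insert u Dm) = card (V - ?S1 - Dm) - 1"
      proof -
        have "V - ?S1 - insert u Dm = (V - ?S1 - Dm) - {u}" by blast
        then show ?thesis using u finV by (simp add: card_Diff_singleton)
      qed
      have "card (V - ?S1 - insert u Dm) > 0" using x2 finV by (auto simp: card_gt_0_iff)
      then obtain i where ji: "j = Suc i" using cd cd1 cd2 nk kj by (cases j) auto
      have "m e \<in> insert x ?S1" if "e \<in> F" "x \<in> e" for e
      proof (cases "e \<subseteq> X2")
        case True
        then have "e \<in> F2" using that F2_def by blast
        then have "e = e0" using F2x[OF _ that(2) e0] e0_def by blast
        then show ?thesis by blast
      next
        case False then show ?thesis using out x that by blast
      qed
      then have "staller_goal V E D (insert x ?S1)"
        unfolding staller_goal_def using xV by (intro bexI[of _ x]) (auto simp: cnx)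
      then have "sw V E D False i (insert x ?S1) (insert u Dm)" by (rule sw_goal)
      then show ?thesis using ji x2 by auto
    next
      case True
      define X3 where "X3 = X2 - {x}"
      have cd3: "card (V - ?S1 - insert x Dm) \<le> j"
      proof -
        have "V - ?S1 - insert x Dm = (V - ?S1 - Dm) - {x}" by blast
        then show ?thesis using x1 finV cd cd1 nk kj by (simp add: card_Diff_singleton)
      qed
      have "sw V E D True j ?S1 (insert x Dm)"
      proof (rule less.IH[of j X3])
        show "j < n" using nk kj by simp
        show "X3 \<subseteq> X" using X2X X3_def by blast
        show "X3 \<noteq> {}" using yx X3_def by blast
        show "\<forall>x'\<in>X3. x' \<notin> ?S1 \<and> x' \<notin> insert x Dm" using fr X3_def me0 X2X by blast
        show "\<forall>e\<in>F. e \<subseteq> X3 \<longrightarrow> m e \<notin> ?S1 \<and> m e \<notin> insert x Dm"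
        proof (intro ballI impI)
          fix e assume e: "e \<in> F" "e \<subseteq> X3"
          have "e \<noteq> e0" using e e0_def X3_def by blast
          then have "m e \<noteq> m e0" using inj e e0F inj_on_def by metis
          moreover have "m e \<noteq> x" using mX e x X2X by blast
          ultimately show "m e \<notin> ?S1 \<and> m e \<notin> insert x Dm" using fm e X3_def by blast
        qed
        show "\<forall>x'\<in>X3. \<forall>e\<in>F. x' \<in> e \<longrightarrow> \<not> e \<subseteq> X3 \<longrightarrow> m e \<in> ?S1"
        proof (intro ballI impI)
          fix x' e assume a: "x' \<in> X3" "e \<in> F" "x' \<in> e" "\<not> e \<subseteq> X3"
          show "m e \<in> ?S1"
          proof (cases "e \<subseteq> X2")
            case True
            then have "x \<in> e" using a X3_def by blast
            moreover have "e \<in> F2" using True a F2_def by blast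
            ultimately have "e = e0" using F2x[OF _ _ e0] e0_def by blast
            then show ?thesis by blast
          next
            case False then show ?thesis using out a X3_def by blast
          qed
        qed
        show "card (V - ?S1 - insert x Dm) \<le> j" by (rule cd3)
      qed
      then show ?thesis using True by simp
    qed
    have "sw V E D False k ?S1 Dm" using kj resp x1 by auto
    then show ?thesis using nk me0 by auto
  qed
qed

lemma staller_wins: "X \<noteq> {} \<Longrightarrow> staller_wins V E D"
  unfolding staller_wins_def
  by (rule core[of X]) (use edge_sub[OF sgF] in auto)

end



lemma tree_parts: assumes "tree V E"
  shows "simple_graph V E" "acyclic_graph V E" "connected_graph V E"
  using assms unfolding tree_def by auto

lemma nbEF:
  assumes bij: "bij_betw m F (VF - X)" and EF: "EF = (\<Union>e\<in>F. (\<lambda>a. {a, m e}) ` e)" and x: "x \<in> X"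
  shows "nbhd EF x = m ` {e\<in>F. x \<in> e}"
proof -
  have mX: "m e \<notin> X" if "e \<in> F" for e using bij_betw_imp_surj_on[OF bij] that by blast
  have "u \<in> nbhd EF x \<longleftrightarrow> (\<exists>e\<in>F. x \<in> e \<and> u = m e)" for u
  proof
    assume "u \<in> nbhd EF x"
    then have "{u,x} \<in> EF" unfolding nbhd_def by simp
    then obtain e a where ea: "e \<in> F" "a \<in> e" "{u,x} = {a, m e}" unfolding EF by blast
    then have "(u = a \<and> x = m e) \<or> (u = m e \<and> x = a)" by (simp add: doubleton_eq_iff)
    then show "\<exists>e\<in>F. x \<in> e \<and> u = m e" using mX[OF ea(1)] x ea by blast
  next
    assume "\<exists>e\<in>F. x \<in> e \<and> u = m e"
    then obtain e where e: "e \<in> F" "x \<in> e" "u = m e" by blast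
    then have "{x, m e} \<in> EF" unfolding EF by blast
    then show "u \<in> nbhd EF x" unfolding nbhd_def using e by (simp add: insert_commute)
  qed
  then show ?thesis by blast
qed

lemma nbhd_fin: assumes "simple_graph V E" shows "finite (nbhd E x)"
proof -
  have "nbhd E x \<subseteq> V" unfolding nbhd_def using sg_edge[OF assms] by blast
  then show ?thesis using sg_fin[OF assms] finite_subset by blast
qed

lemma nbE_eq:
  assumes sg: "simple_graph V E" and sub: "EF \<subseteq> E" and dg: "degree E x = degree EF x"
  shows "nbhd E x = nbhd EF x"
proof -
  have "nbhd EF x \<subseteq> nbhd E x" using sub unfolding nbhd_def by blast
  moreover have "card (nbhd EF x) = card (nbhd E x)" using dg unfolding degree_def by simp
  ultimately show ?thesis using card_subset_eq[OF nbhd_fin[OF sg]] by metis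
qed

lemma sub_data:
  assumes "substructure V E VF EF X"
  obtains F m where "tree X F" "bij_betw m F (VF - X)" "EF = (\<Union>e\<in>F. (\<lambda>a. {a, m e}) ` e)"
    "X \<subseteq> VF" "VF \<subseteq> V" "EF \<subseteq> E" "\<forall>v\<in>X. degree E v = degree EF v"
proof -
  have s: "subdivided_tree VF EF X" "VF \<subseteq> V" "EF \<subseteq> E" "\<forall>v\<in>X. degree E v = degree EF v"
    using assms unfolding substructure_def by simp_all
  have "X \<subseteq> VF" using s(1) unfolding subdivided_tree_def by simp
  moreover obtain F m where "tree X F" "bij_betw m F (VF - X)" "EF = (\<Union>e\<in>F. (\<lambda>a. {a, m e}) ` e)"
    using s(1) unfolding subdivided_tree_def by (elim conjE exE)
  ultimately show ?thesis using that s by blast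
qed

lemma sub_staller:
  assumes T: "tree V E" and S: "substructure V E VF EF X" and XD: "X \<inter> D' = {}"
  shows "staller_wins V E D'"
proof -
  obtain F m where F: "tree X F" "bij_betw m F (VF - X)" "EF = (\<Union>e\<in>F. (\<lambda>a. {a, m e}) ` e)"
    "X \<subseteq> VF" "VF \<subseteq> V" "EF \<subseteq> E" "\<forall>v\<in>X. degree E v = degree EF v"
    using sub_data[OF S] by blast
  have sg: "simple_graph V E" using tree_parts[OF T] by blast
  have nb: "\<forall>x\<in>X. closed_nbhd E x = insert x (m ` {e\<in>F. x \<in> e})"
  proof
    fix x assume x: "x \<in> X"
    have "nbhd E x = nbhd EF x" using nbE_eq[OF sg F(6)] F(7) x by blast
    also have "\<dots> = m ` {e\<in>F. x \<in> e}" using nbEF[OF F(2,3) x] .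
    finally show "closed_nbhd E x = insert x (m ` {e\<in>F. x \<in> e})" unfolding closed_nbhd_def by simp
  qed
  have im: "m ` F = VF - X" using bij_betw_imp_surj_on[OF F(2)] .
  interpret stctx V E D' X F m
  proof
    show "simple_graph V E" by (rule sg)
    show "simple_graph X F" "acyclic_graph X F" using tree_parts[OF F(1)] by blast+
    show "X \<subseteq> V" using F(4,5) by (rule subset_trans)
    show "m ` F \<subseteq> V" using im F(5) by blast
    show "m ` F \<inter> X = {}" using im by blast
    show "inj_on m F" using F(2) bij_betw_imp_inj_on by blast
    show "\<forall>x\<in>X. closed_nbhd E x = insert x (m ` {e\<in>F. x \<in> e})" by (rule nb)
    show "X \<inter> D' = {}" by (rule XD)
  qed
  have "X \<noteq> {}" using tree_parts(3)[OF F(1)] unfolding connected_graph_def by blast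
  then show ?thesis by (rule staller_wins)
qed

lemma walk_closed:
  "successively R p \<Longrightarrow> p \<noteq> [] \<Longrightarrow> hd p \<in> A \<Longrightarrow> (\<forall>a b. a \<in> A \<longrightarrow> R a b \<longrightarrow> b \<in> A) \<Longrightarrow> last p \<in> A"
  by (induction p rule: induct_list012) auto

lemma sub_dom:
  assumes T: "tree V E" and S: "substructure V E VF EF X" and v: "v \<in> X"
  shows "\<not> (\<exists>Z. LS E V (X - {v}) Z)"
proof
  assume "\<exists>Z. LS E V (X - {v}) Z"
  then obtain Z where Z: "LS E V (X - {v}) Z" by blast
  obtain F m where F: "tree X F" "bij_betw m F (VF - X)" "EF = (\<Union>e\<in>F. (\<lambda>a. {a, m e}) ` e)"
    "X \<subseteq> VF" "VF \<subseteq> V" "EF \<subseteq> E" "\<forall>v\<in>X. degree E v = degree EF v"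
    using sub_data[OF S] by blast
  have sg: "simple_graph V E" using tree_parts[OF T] by blast
  have sgF: "simple_graph X F" using tree_parts[OF F(1)] by blast
  have nbx: "nbhd E x = m ` {e\<in>F. x \<in> e}" if x: "x \<in> X" for x
    using nbE_eq[OF sg F(6)] F(7) x nbEF[OF F(2,3) x] by blast
  have ZX: "Z \<subseteq> X - {v}" using LS_parts(3)[OF Z] .
  have inj: "inj_on m F" using F(2) bij_betw_imp_inj_on by blast
  have clos: "x' \<in> Z" if z: "z \<in> Z" and e: "adj F z x'" for z x'
  proof -
    define e where "e = {z,x'}"
    have eF: "e \<in> F" using e e_def adj_def by metis
    obtain w where w: "e = {z,w}" "w \<noteq> z" "w \<in> X" using edge2[OF sgF eF, of z] e_def by blast
    have zx: "z \<noteq> x'" using sg_edge[OF sgF] eF e_def by blast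
    have zX: "z \<in> X" using z ZX by blast
    have "m e \<in> nbhd E z" using nbx[OF zX] eF e_def by blast
    then have me: "{m e, z} \<in> E" unfolding nbhd_def by simp
    have meV: "m e \<in> V" using sg_edge[OF sg me] by blast
    have c2: "card {t\<in>Z. {m e, t} \<in> E} = 2" using LS_parts(5)[OF Z meV z me] .
    have sub: "{t\<in>Z. {m e, t} \<in> E} \<subseteq> e"
    proof
      fix t assume t: "t \<in> {t\<in>Z. {m e, t} \<in> E}"
      then have tX: "t \<in> X" using ZX by blast
      have "m e \<in> nbhd E t" using t unfolding nbhd_def by simp
      then obtain e' where e': "e' \<in> F" "t \<in> e'" "m e = m e'" using nbx[OF tX] by blast
      then have "e = e'" using inj eF inj_on_def by metis
      then show "t \<in> e" using e' by simp
    qed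
    have ce: "card e = 2" using e_def zx by simp
    have "{t\<in>Z. {m e, t} \<in> E} = e" using card_subset_eq[OF _ sub] ce c2 e_def by simp
    then show ?thesis using e_def by blast
  qed
  obtain z where z: "z \<in> Z" using LS_parts(1)[OF Z] by blast
  have zX: "z \<in> X" using z ZX by blast
  obtain p where p: "walk X F p" "hd p = z" "last p = v"
    using tree_parts(3)[OF F(1)] zX v unfolding connected_graph_def by blast
  have "last p \<in> Z"
    using walk_closed[of "adj F" p Z] p clos z unfolding walk_succ by blast
  then show False using p ZX by blast
qed



lemma succ_conj: "successively P xs \<Longrightarrow> successively Q xs \<Longrightarrow> successively (\<lambda>a b. P a b \<and> Q a b) xs"
  by (induction xs rule: induct_list012) auto

lemma succ_mem: "successively (\<lambda>a b. b \<in> set xs) (y # xs)"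
proof (induction xs arbitrary: y)
  case Nil then show ?case by simp
next
  case (Cons z zs)
  have "successively (\<lambda>a b. b \<in> set (z # zs)) (z # zs)"
    by (rule successively_mono[OF Cons.IH[of z]]) auto
  then show ?case by simp
qed

lemma lift_reach:
  "successively (\<lambda>a b. \<exists>c\<in>W. {a,c} \<in> E \<and> {c,b} \<in> E) q \<Longrightarrow> set q \<subseteq> W \<Longrightarrow> q \<noteq> [] \<Longrightarrow>
   reach W E (hd q) (last q)"
proof (induction q rule: induct_list012)
  case (2 x) then show ?case using reach_refl by simp
next
  case (3 a b r)
  obtain c where c: "c \<in> W" "{a,c} \<in> E" "{c,b} \<in> E" using "3.prems"(1) by auto
  have aW: "a \<in> W" using "3.prems"(2) by simp
  have "reach W E a a" using reach_refl[OF aW] .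
  then have "reach W E a c" using reach_step c by metis
  then have ab: "reach W E a b" using reach_step c "3.prems"(2) by (metis insert_subset list.simps(15))
  have "reach W E b (last (b # r))" using "3.IH"(2) "3.prems" by auto
  then show ?case using reach_trans[OF ab] by simp
qed simp

locale minctx =
  fixes V E Y X
  assumes T: "tree V E" and L: "LS E V Y X" and mn: "\<forall>X'. LS E V Y X' \<longrightarrow> card X \<le> card X'"
begin

lemma sg: "simple_graph V E" using tree_parts[OF T] by blast
lemma ac: "acyclic_graph V E" using tree_parts[OF T] by blast
lemma XV: "X \<subseteq> V" using LS_parts(2)[OF L] .
lemma finX: "finite X" using finite_subset[OF XV sg_fin[OF sg]] .

definition "A c = {x \<in> X. {c,x} \<in> E}"
definition "M = {c \<in> V. \<exists>x\<in>X. {c,x} \<in> E}"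
definition "F = {{x,x'} | x x'. x \<in> X \<and> x' \<in> X \<and> x \<noteq> x' \<and> (\<exists>c\<in>V. {c,x} \<in> E \<and> {c,x'} \<in> E)}"
definition "mid e = (SOME c. c \<in> V \<and> (\<forall>a\<in>e. {c,a} \<in> E))"

lemma MX: "c \<in> M \<Longrightarrow> c \<notin> X"
proof
  assume "c \<in> M" "c \<in> X"
  then obtain x where "x \<in> X" "{c,x} \<in> E" unfolding M_def by blast
  then show False using LS_parts(4)[OF L \<open>c \<in> X\<close>] by blast
qed

lemma cA: "c \<in> M \<Longrightarrow> card (A c) = 2"
proof -
  assume "c \<in> M"
  then obtain x where x: "c \<in> V" "x \<in> X" "{c,x} \<in> E" unfolding M_def by blast
  show ?thesis unfolding A_def using LS_parts(5)[OF L x] .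
qed

lemma uniq:
  assumes x: "x \<in> X" "x' \<in> X" "x \<noteq> x'" and c: "c \<in> V" "{c,x} \<in> E" "{c,x'} \<in> E"
    and c': "c' \<in> V" "{c',x} \<in> E" "{c',x'} \<in> E"
  shows "c = c'"
proof (rule ccontr)
  assume cc: "c \<noteq> c'"
  have cM: "c \<in> M" unfolding M_def using c x by blast
  have "c' \<in> M" unfolding M_def using c' x by blast
  have W: "{x, c', x'} \<subseteq> V - {c}" using MX[OF cM] x cc c' XV by auto
  have "walk (V - {c}) E [x, c', x']" unfolding walk_succ using W c'
    by (auto simp: adj_def insert_commute)
  then have "reach (V - {c}) E x x'" unfolding reach_def by force
  then show False
    using cycle_from_reach[OF ac, of "V - {c}" c x x'] c x by (auto simp: insert_commute)
qed

lemma Fedge: "e \<in> F \<Longrightarrow> \<exists>x x' c. e = {x,x'} \<and> x \<in> X \<and> x' \<in> X \<and> x \<noteq> x' \<and> c \<in> V \<and> {c,x} \<in> E \<and> {c,x'} \<in> E"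
  unfolding F_def by blast

lemma midp: assumes "e \<in> F" shows "mid e \<in> V" "\<forall>a\<in>e. {mid e, a} \<in> E"
proof -
  obtain x x' c where "e = {x,x'}" "c \<in> V" "{c,x} \<in> E" "{c,x'} \<in> E" using Fedge[OF assms] by blast
  then have "\<exists>c. c \<in> V \<and> (\<forall>a\<in>e. {c,a} \<in> E)" by blast
  then have "mid e \<in> V \<and> (\<forall>a\<in>e. {mid e,a} \<in> E)" unfolding mid_def by (rule someI_ex)
  then show "mid e \<in> V" "\<forall>a\<in>e. {mid e, a} \<in> E" by auto
qed

lemma FX: "e \<in> F \<Longrightarrow> e \<subseteq> X" using Fedge by blast

lemma midM: "e \<in> F \<Longrightarrow> mid e \<in> M"
proof -
  assume e: "e \<in> F"
  obtain x x' c where "e = {x,x'}" "x \<in> X" using Fedge[OF e] by blast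
  then show ?thesis unfolding M_def using midp[OF e] by blast
qed

lemma Ae: assumes e: "e \<in> F" shows "A (mid e) = e"
proof -
  obtain x x' c where ex: "e = {x,x'}" "x \<noteq> x'" using Fedge[OF e] by blast
  have sub: "e \<subseteq> A (mid e)" unfolding A_def using FX[OF e] midp(2)[OF e] by blast
  have "card e = 2" using ex by simp
  moreover have "card (A (mid e)) = 2" using cA[OF midM[OF e]] .
  moreover have "finite (A (mid e))" unfolding A_def using finX by simp
  ultimately show ?thesis using card_subset_eq[OF _ sub] by simp
qed

lemma inj: "inj_on mid F"
  by (metis Ae inj_onI)

lemma imF: "mid ` F = M"
proof
  show "mid ` F \<subseteq> M" using midM by blast
  show "M \<subseteq> mid ` F"
  proof
    fix c assume cM: "c \<in> M"
    then have cV: "c \<in> V" unfolding M_def by blast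
    obtain x x' where xx: "A c = {x,x'}" "x \<noteq> x'" using cA[OF cM] card_2_iff by metis
    have xX: "x \<in> X" "x' \<in> X" "{c,x} \<in> E" "{c,x'} \<in> E" using xx unfolding A_def by blast+
    define e where "e = {x,x'}"
    have eF: "e \<in> F" unfolding F_def e_def using xX xx(2) cV by blast
    have "mid e = c" using uniq[OF xX(1,2) xx(2) midp(1)[OF eF] _ _ cV xX(3,4)] midp(2)[OF eF] e_def by blast
    then show "c \<in> mid ` F" using eF by blast
  qed
qed

definition "VF = X \<union> M"
definition "EF = (\<Union>e\<in>F. (\<lambda>a. {a, mid e}) ` e)"

lemma bij: "bij_betw mid F (VF - X)"
proof -
  have "VF - X = M" unfolding VF_def using MX by blast
  then show ?thesis using inj imF by (simp add: bij_betw_def)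
qed

lemma EFE: "EF \<subseteq> E"
proof
  fix s assume "s \<in> EF"
  then obtain e a where ea: "e \<in> F" "a \<in> e" "s = {a, mid e}" unfolding EF_def by blast
  then show "s \<in> E" using midp(2)[OF ea(1)] by (simp add: insert_commute)
qed

lemma nbh: assumes x: "x \<in> X" shows "nbhd EF x = nbhd E x"
proof -
  have "nbhd EF x = mid ` {e\<in>F. x \<in> e}" using nbEF[OF bij EF_def x] .
  also have "\<dots> = nbhd E x"
  proof
    show "mid ` {e\<in>F. x \<in> e} \<subseteq> nbhd E x" unfolding nbhd_def using midp(2) by blast
    show "nbhd E x \<subseteq> mid ` {e\<in>F. x \<in> e}"
    proof
      fix u assume "u \<in> nbhd E x"
      then have ux: "{u,x} \<in> E" unfolding nbhd_def by simp
      then have uV: "u \<in> V" using sg_edge[OF sg] by blast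
      then have uM: "u \<in> M" unfolding M_def using ux x by blast
      have xA: "x \<in> A u" unfolding A_def using ux x by blast
      obtain x'' where x'': "x'' \<in> A u" "x'' \<noteq> x"
        using cA[OF uM] xA card_2_iff' by metis
      have x''X: "x'' \<in> X" "{u,x''} \<in> E" using x'' unfolding A_def by blast+
      define e where "e = {x,x''}"
      have eF: "e \<in> F" unfolding F_def e_def using x x''X x''(2) uV ux by blast
      have "mid e = u" using uniq[OF x x''X(1) x''(2)[symmetric] midp(1)[OF eF] _ _ uV ux x''X(2)] midp(2)[OF eF] e_def by blast
      then show "u \<in> mid ` {e\<in>F. x \<in> e}" using eF e_def by blast
    qed
  qed
  finally show ?thesis .
qed

lemma F_intro:
  assumes "x \<in> X" "x' \<in> X" "x \<noteq> x'" "c \<in> V" "{c,x} \<in> E" "{c,x'} \<in> E"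
  shows "{x,x'} \<in> F"
  unfolding F_def using assms by auto

lemma sgF: "simple_graph X F"
  unfolding simple_graph_def
proof (intro conjI ballI)
  show "finite X" by (rule finX)
  fix e assume "e \<in> F"
  then show "\<exists>u v. e = {u, v} \<and> u \<noteq> v \<and> u \<in> X \<and> v \<in> X" using Fedge by blast
qed

lemma conn: "connected_graph X F"
proof -
  have r: "reach X F x x'" if x: "x \<in> X" and x': "x' \<in> X" for x x'
  proof -
    define R where "R = {t \<in> X. reach X F x t}"
    have RX: "R \<subseteq> X" unfolding R_def by blast
    have cnt: "card {z \<in> R. {m,z} \<in> E} = 2" if m: "m \<in> V" and t: "t \<in> R" "{m,t} \<in> E" for m t
    proof -
      have mM: "m \<in> M" unfolding M_def using m t RX by blast
      have "{z \<in> R. {m,z} \<in> E} = A m"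
      proof
        show "{z \<in> R. {m,z} \<in> E} \<subseteq> A m" unfolding A_def using RX by blast
        show "A m \<subseteq> {z \<in> R. {m,z} \<in> E}"
        proof
          fix z assume z: "z \<in> A m"
          then have zX: "z \<in> X" "{m,z} \<in> E" unfolding A_def by blast+
          show "z \<in> {z \<in> R. {m,z} \<in> E}"
          proof (cases "z = t")
            case True then show ?thesis using t zX by blast
          next
            case False
            have tX: "t \<in> X" using t RX by blast
            have "{t,z} \<in> F" using F_intro[OF tX zX(1) _ m t(2) zX(2)] False by metis
            moreover have "reach X F x t" using t(1) unfolding R_def by blast
            ultimately have "reach X F x z" using reach_step[of X F x t z] zX(1) by simp
            then show ?thesis using zX unfolding R_def by blast
          qed
        qed
      qed
      then show ?thesis using cA[OF mM] by simp
    qed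
    have "LS E V Y R" unfolding LS_def
    proof (intro conjI ballI impI)
      have "x \<in> R" unfolding R_def using x reach_refl[OF x] by blast
      then show "R \<noteq> {}" by blast
      show "R \<subseteq> V" using RX XV by blast
      show "R \<subseteq> Y" using RX LS_parts(3)[OF L] by blast
    next
      fix a b assume "a \<in> R" "b \<in> R"
      then have "a \<in> X" "b \<in> X" using RX by blast+
      then show "{a,b} \<notin> E" using LS_parts(4)[OF L] by blast
    next
      fix m assume m: "m \<in> V" "\<exists>t\<in>R. {m,t} \<in> E"
      then obtain t where "t \<in> R" "{m,t} \<in> E" by blast
      then show "card {z \<in> R. {m,z} \<in> E} = 2" using cnt[OF m(1)] by blast
    qed
    then have "card X \<le> card R" using mn by blast
    moreover have "card R \<le> card X" using card_mono[OF finX RX] .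
    ultimately have "R = X" using card_subset_eq[OF finX RX] by simp
    then have "x' \<in> R" using x' by simp
    then show ?thesis unfolding R_def by blast
  qed
  show ?thesis unfolding connected_graph_def
  proof (intro conjI ballI)
    show "X \<noteq> {}" using LS_parts(1)[OF L] .
    fix u v assume "u \<in> X" "v \<in> X"
    then have "reach X F u v" by (rule r)
    then show "\<exists>p. walk X F p \<and> hd p = u \<and> last p = v" unfolding reach_def .
  qed
qed

lemma acyc: "acyclic_graph X F"
  unfolding acyclic_graph_def
proof
  assume "\<exists>c. is_cycle X F c"
  then obtain c where c: "is_cycle X F c" by blast
  have cc: "length c \<ge> 3" "distinct c" "set c \<subseteq> X" "successively (adj F) c" "adj F (last c) (hd c)"
    using c unfolding is_cycle_def walk_succ by auto
  obtain x1 c' where c1: "c = x1 # c'" using cc(1) by (cases c) auto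
  obtain x2 r where c2: "c' = x2 # r" using cc(1) c1 by (cases c') auto
  have "r \<noteq> []" using cc(1) c1 c2 by auto
  then have c12: "c = x1 # x2 # r" "r \<noteq> []" using c1 c2 by auto
  have e12: "{x1,x2} \<in> F" using cc(4) c12 by (simp add: adj_def)
  define g where "g = mid {x1,x2}"
  have gV: "g \<in> V" and gx: "{g,x1} \<in> E" "{g,x2} \<in> E" using midp[OF e12] g_def by auto
  have gM: "g \<in> M" using midM[OF e12] g_def by simp
  have Ag: "A g = {x1,x2}" using Ae[OF e12] g_def by simp
  have x12: "x1 \<noteq> x2" "x1 \<notin> set r" "x2 \<notin> set r" using cc(2) c12 by auto
  define q where "q = (x2 # r) @ [x1]"
  have s1: "successively (adj F) q"
    unfolding q_def successively_append_iff using cc(4,5) c12 by (auto simp: successively_Cons)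
  have "successively (\<lambda>a b. b \<in> set r) (x2 # r)" by (rule succ_mem)
  then have s2: "successively (\<lambda>a b. a \<in> set r \<or> b \<in> set r) q"
    unfolding q_def successively_append_iff using c12(2)
    by (auto intro: successively_mono)
  have s3: "successively (\<lambda>a b. \<exists>c\<in>V - {g}. {a,c} \<in> E \<and> {c,b} \<in> E) q"
  proof (rule successively_mono[OF succ_conj[OF s1 s2]])
    fix a b assume ab: "adj F a b \<and> (a \<in> set r \<or> b \<in> set r)"
    then have eF: "{a,b} \<in> F" by (simp add: adj_def)
    have abX: "a \<in> X" "b \<in> X" using FX[OF eF] by auto
    define m where "m = mid {a,b}"
    have mV: "m \<in> V" and mab: "{m,a} \<in> E" "{m,b} \<in> E" using midp[OF eF] m_def by auto
    have "m \<noteq> g"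
    proof
      assume "m = g"
      then have "a \<in> A g" "b \<in> A g" unfolding A_def using abX mab by auto
      then show False using Ag ab x12 by auto
    qed
    then show "\<exists>c\<in>V - {g}. {a,c} \<in> E \<and> {c,b} \<in> E" using mV mab by (auto simp: insert_commute)
  qed
  have sq: "set q \<subseteq> V - {g}" unfolding q_def using cc(3) c12 XV MX[OF gM] by auto
  have "reach (V - {g}) E (hd q) (last q)" using lift_reach[OF s3 sq] q_def by simp
  then have "reach (V - {g}) E x2 x1" unfolding q_def by simp
  then show False
    using cycle_from_reach[OF ac, of "V - {g}" g x2 x1] gV gx x12(1) by (auto simp: insert_commute)
qed

lemma result: "\<exists>VF EF. substructure V E VF EF X"
proof (intro exI)
  show "substructure V E VF EF X"
    unfolding substructure_def subdivided_tree_def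
  proof (intro conjI)
    show "X \<subseteq> VF" unfolding VF_def by blast
    show "\<exists>E' m. tree X E' \<and> bij_betw m E' (VF - X) \<and> EF = (\<Union>e\<in>E'. (\<lambda>a. {a, m e}) ` e)"
      using sgF conn acyc bij EF_def unfolding tree_def by blast
    show "VF \<subseteq> V" unfolding VF_def M_def using XV by blast
    show "EF \<subseteq> E" by (rule EFE)
    show "\<forall>v\<in>X. degree E v = degree EF v" using nbh unfolding degree_def by simp
  qed
qed

end



lemma part1:
  assumes T: "tree V E" and DV: "D \<subseteq> V"
  shows "mbd_critical V E D \<longleftrightarrow> (\<exists>VF EF X. substructure V E VF EF X \<and> D = V - X)"
proof
  assume crit: "mbd_critical V E D"
  have sg: "simple_graph V E" and ac: "acyclic_graph V E" using tree_parts[OF T] by blast+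
  have sw: "staller_wins V E D" using crit unfolding mbd_critical_def by blast
  have "\<exists>X. LS E V (V - D) X" using dom_wins_start[OF sg ac] sw by blast
  then obtain X1 where X1: "LS E V (V - D) X1" by blast
  obtain X0 where X0: "LS E V (V - D) X0" and mn: "\<forall>X'. LS E V (V - D) X' \<longrightarrow> card X0 \<le> card X'"
    using ex_has_least_nat[of "\<lambda>X. LS E V (V - D) X" X1 card] X1 by blast
  interpret minctx V E "V - D" X0 using T X0 mn by unfold_locales
  obtain VF EF where S: "substructure V E VF EF X0" using result by blast
  have X0D: "X0 \<subseteq> V - D" using LS_parts(3)[OF X0] .
  have "V - D \<subseteq> X0"
  proof
    fix v assume v: "v \<in> V - D"
    show "v \<in> X0"
    proof (rule ccontr)
      assume "v \<notin> X0"
      then have "X0 \<inter> insert v D = {}" using X0D by blast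
      then have "staller_wins V E (insert v D)" using sub_staller[OF T S] by blast
      then show False using crit v unfolding mbd_critical_def by blast
    qed
  qed
  then have "D = V - X0" using X0D DV by blast
  then show "\<exists>VF EF X. substructure V E VF EF X \<and> D = V - X" using S by blast
next
  assume "\<exists>VF EF X. substructure V E VF EF X \<and> D = V - X"
  then obtain VF EF X where S: "substructure V E VF EF X" and D: "D = V - X" by blast
  have sg: "simple_graph V E" and ac: "acyclic_graph V E" using tree_parts[OF T] by blast+
  have XV: "X \<subseteq> V" using S unfolding substructure_def subdivided_tree_def by blast
  have sw: "staller_wins V E D" using sub_staller[OF T S] D by blast
  have "\<not> staller_wins V E (insert v D)" if v: "v \<in> V - D" for v
  proof -
    have vX: "v \<in> X" using v D by blast
    have eq: "V - insert v D = X - {v}" using D XV by blast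
    have "\<not> (\<exists>Z. LS E V (V - insert v D) Z)" unfolding eq by (rule sub_dom[OF T S vX])
    then show ?thesis by (rule dom_wins_start[OF sg ac])
  qed
  then show "mbd_critical V E D" unfolding mbd_critical_def using sw by blast
qed

lemma part2:
  assumes T: "tree V E" and DV: "D \<subseteq> V"
  shows "atomic_mbd_critical V E D \<longleftrightarrow> (\<exists>X. subdivided_tree V E X \<and> D = V - X)"
proof
  assume at: "atomic_mbd_critical V E D"
  have sg: "simple_graph V E" and cn: "connected_graph V E" using tree_parts[OF T] by blast+
  have ind: "\<forall>u\<in>D. \<forall>v\<in>D. {u,v} \<notin> E" using at unfolding atomic_mbd_critical_def by blast
  have "mbd_critical V E D" using at unfolding atomic_mbd_critical_def by blast
  then obtain VF EF X where S: "substructure V E VF EF X" and D: "D = V - X" using part1[OF T DV] by blast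
  obtain F m where F: "tree X F" "bij_betw m F (VF - X)" "EF = (\<Union>e\<in>F. (\<lambda>a. {a, m e}) ` e)"
    "X \<subseteq> VF" "VF \<subseteq> V" "EF \<subseteq> E" "\<forall>v\<in>X. degree E v = degree EF v"
    using sub_data[OF S] by blast
  have nbx: "nbhd E x \<subseteq> VF" if x: "x \<in> X" for x
  proof -
    have "nbhd E x = nbhd EF x" using nbE_eq[OF sg F(6)] F(7) x by blast
    also have "\<dots> = m ` {e\<in>F. x \<in> e}" using nbEF[OF F(2,3) x] .
    also have "\<dots> \<subseteq> VF" using bij_betw_imp_surj_on[OF F(2)] by blast
    finally show ?thesis .
  qed
  have nbeq: "nbhd E x = nbhd EF x" if x: "x \<in> X" for x using nbE_eq[OF sg F(6)] F(7) x by blast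
  have VF: "VF = V"
  proof (rule ccontr)
    assume "VF \<noteq> V"
    then obtain w where w: "w \<in> V - VF" using F(5) by blast
    obtain x where x: "x \<in> X" using tree_parts(3)[OF F(1)] unfolding connected_graph_def by blast
    have xV: "x \<in> V" using x F(4,5) by blast
    obtain p where p: "walk V E p" "hd p = w" "last p = x"
      using cn w xV unfolding connected_graph_def by blast
    have "\<not> (\<forall>a b. a \<in> V - VF \<longrightarrow> adj E a b \<longrightarrow> b \<in> V - VF)"
    proof
      assume "\<forall>a b. a \<in> V - VF \<longrightarrow> adj E a b \<longrightarrow> b \<in> V - VF"
      then have "last p \<in> V - VF" using walk_closed[of "adj E" p "V - VF"] p w unfolding walk_succ by blast
      then show False using p x F(4) by blast
    qed
    then obtain a b where ab: "a \<in> V - VF" "{a,b} \<in> E" "b \<notin> V - VF" unfolding adj_def by blast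
    have bV: "b \<in> VF" using ab sg_edge[OF sg ab(2)] by blast
    show False
    proof (cases "b \<in> X")
      case True
      have "a \<in> nbhd E b" unfolding nbhd_def using ab(2) by simp
      then show False using nbx[OF True] ab(1) by blast
    next
      case False
      then have "a \<in> D" "b \<in> D" using D ab(1) bV F(5) F(4) by blast+
      then show False using ind ab(2) by blast
    qed
  qed
  have EF: "EF = E"
  proof
    show "EF \<subseteq> E" by (rule F(6))
    show "E \<subseteq> EF"
    proof
      fix e assume e: "e \<in> E"
      then obtain a b where ab: "e = {a,b}" "a \<noteq> b" "a \<in> V" "b \<in> V" using sg unfolding simple_graph_def by meson
      show "e \<in> EF"
      proof (cases "a \<in> X")
        case True
        have "b \<in> nbhd E a" unfolding nbhd_def using e ab by (simp add: insert_commute)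
        then have "b \<in> nbhd EF a" using nbeq[OF True] by simp
        then show ?thesis unfolding nbhd_def using ab by (simp add: insert_commute)
      next
        case aX: False
        show ?thesis
        proof (cases "b \<in> X")
          case True
          have "a \<in> nbhd E b" unfolding nbhd_def using e ab by simp
          then have "a \<in> nbhd EF b" using nbeq[OF True] by simp
          then show ?thesis unfolding nbhd_def using ab by simp
        next
          case False
          then have "a \<in> D" "b \<in> D" using aX D ab by blast+
          then show ?thesis using ind e ab by blast
        qed
      qed
    qed
  qed
  have "subdivided_tree VF EF X" using S unfolding substructure_def by blast
  then have "subdivided_tree V E X" using VF EF by simp
  then show "\<exists>X. subdivided_tree V E X \<and> D = V - X" using D by blast
next
  assume "\<exists>X. subdivided_tree V E X \<and> D = V - X"
  then obtain X where S: "subdivided_tree V E X" and D: "D = V - X" by blast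
  have sg: "simple_graph V E" using tree_parts[OF T] by blast
  have sub: "substructure V E V E X" unfolding substructure_def using S by blast
  have crit: "mbd_critical V E D" using part1[OF T DV] sub D by blast
  have "X \<subseteq> V" using S unfolding subdivided_tree_def by blast
  obtain F m where F: "tree X F" "bij_betw m F (V - X)" "E = (\<Union>e\<in>F. (\<lambda>a. {a, m e}) ` e)"
    using S unfolding subdivided_tree_def by (elim conjE exE)
  have sgF: "simple_graph X F" using tree_parts[OF F(1)] by blast
  have ind: "\<forall>u\<in>D. \<forall>v\<in>D. {u,v} \<notin> E"
  proof (intro ballI notI)
    fix u v assume uv: "u \<in> D" "v \<in> D" "{u,v} \<in> E"
    then obtain e a where ea: "e \<in> F" "a \<in> e" "{u,v} = {a, m e}" using F(3) by blast
    have "a \<in> X" using edge_sub[OF sgF ea(1)] ea(2) by blast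
    moreover have "u = a \<or> v = a" using ea(3) by (auto simp: doubleton_eq_iff)
    ultimately show False using uv D by blast
  qed
  have iso: "\<forall>d\<in>D. \<exists>u. {u,d} \<in> E"
  proof
    fix d assume d: "d \<in> D"
    then have "d \<in> m ` F" using bij_betw_imp_surj_on[OF F(2)] D by blast
    then obtain e where e: "e \<in> F" "d = m e" by blast
    obtain x y where "e = {x,y}" using sgF e(1) unfolding simple_graph_def by meson
    then have "x \<in> e" by simp
    then have "{x, d} \<in> E" using F(3) e by blast
    then show "\<exists>u. {u,d} \<in> E" by blast
  qed
  show "atomic_mbd_critical V E D" unfolding atomic_mbd_critical_def using crit ind iso by blast
qed

theorem theorem4p6:
  fixes V :: "'a set" and E :: "'a set set" and D :: "'a set"
  assumes "tree V E" and "D \<subseteq> V"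
  shows "(mbd_critical V E D \<longleftrightarrow> (\<exists>VF EF X. substructure V E VF EF X \<and> D = V - X))
     \<and> (atomic_mbd_critical V E D \<longleftrightarrow> (\<exists>X. subdivided_tree V E X \<and> D = V - X))"
  using part1[OF assms] part2[OF assms] by blast


end
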